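(* IW-PAV can fail to produce a committee satisfying weak-SW-JR: there exists an approval-based SCV instance in which a committee maximizing the IW-PAV score does not satisfy weak-SW-JR.
   Context: An approval-based sub-committee voting (SCV) instance consists of a set of voters $N=\{1,\ldots,n\}$, a finite set of candidates $C$ partitioned into candidate subsets $C_1,\ldots,C_\ell$, positive integer quotas $k_j\le |C_j|$ with $k=\sum_{j=1}^\ell k_j$, and approval ballots $A_i\subseteq C$ for $i\in N$. A committee is a set $W\subseteq C$ with $|W\cap C_j|=k_j$ for every $j$. Let $r(0)=0$ and $r(t)=\sum_{p=1}^t 1/p$ for $t\ge1$. The IW-PAV score of $W$ is $\sum_{j=1}^\ell\sum_{i\in N} r(|W\cap A_i\cap C_j|)$. $W$ satisfies weak-SW-JR if for every $X\subseteq N$ with $|X|\ge n/k$ and $|(\bigcap_{i\in X}A_i)\cap C_j|\ge 1$ for all $j=1,\ldots,\ell$ we have $|W\cap \bigcup_{i\in X}A_i|\ge 1$. *)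

theory Defs
  imports Main Complex_Main
begin

definition scv_candidates :: "nat \<Rightarrow> (nat \<Rightarrow> 'c set) \<Rightarrow> 'c set" where
  "scv_candidates l Cs = (\<Union>j\<in>{1..l}. Cs j)"

definition scv_instance ::
  "nat \<Rightarrow> nat \<Rightarrow> (nat \<Rightarrow> 'c set) \<Rightarrow> (nat \<Rightarrow> nat) \<Rightarrow> (nat \<Rightarrow> 'c set) \<Rightarrow> bool" where
  "scv_instance n l Cs q A \<longleftrightarrow>
     n \<ge> 1 \<and> l \<ge> 1 \<and>
     finite (scv_candidates l Cs) \<and>
     (\<forall>j\<in>{1..l}. \<forall>j'\<in>{1..l}. j \<noteq> j' \<longrightarrow> Cs j \<inter> Cs j' = {}) \<and>
     (\<forall>j\<in>{1..l}. 1 \<le> q j \<and> q j \<le> card (Cs j)) \<and>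
     (\<forall>i\<in>{1..n}. A i \<subseteq> scv_candidates l Cs)"

definition total_quota :: "nat \<Rightarrow> (nat \<Rightarrow> nat) \<Rightarrow> nat" where
  "total_quota l q = (\<Sum>j=1..l. q j)"

definition is_committee :: "nat \<Rightarrow> (nat \<Rightarrow> 'c set) \<Rightarrow> (nat \<Rightarrow> nat) \<Rightarrow> 'c set \<Rightarrow> bool" where
  "is_committee l Cs q W \<longleftrightarrow>
     W \<subseteq> scv_candidates l Cs \<and> (\<forall>j\<in>{1..l}. card (W \<inter> Cs j) = q j)"

definition pav_r :: "nat \<Rightarrow> real" where
  "pav_r t = (\<Sum>p=1..t. 1 / real p)"

definition iw_pav_score ::
  "nat \<Rightarrow> nat \<Rightarrow> (nat \<Rightarrow> 'c set) \<Rightarrow> (nat \<Rightarrow> 'c set) \<Rightarrow> 'c set \<Rightarrow> real" where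
  "iw_pav_score n l Cs A W = (\<Sum>j=1..l. \<Sum>i=1..n. pav_r (card (W \<inter> A i \<inter> Cs j)))"

definition weak_SW_JR ::
  "nat \<Rightarrow> nat \<Rightarrow> (nat \<Rightarrow> 'c set) \<Rightarrow> (nat \<Rightarrow> nat) \<Rightarrow> (nat \<Rightarrow> 'c set) \<Rightarrow> 'c set \<Rightarrow> bool" where
  "weak_SW_JR n l Cs q A W \<longleftrightarrow>
     (\<forall>X. X \<subseteq> {1..n} \<longrightarrow>
          real (card X) \<ge> real n / real (total_quota l q) \<longrightarrow>
          (\<forall>j\<in>{1..l}. card ((\<Inter>i\<in>X. A i) \<inter> Cs j) \<ge> 1) \<longrightarrow>
          card (W \<inter> (\<Union>i\<in>X. A i)) \<ge> 1)"

definition iw_pav_winner ::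
  "nat \<Rightarrow> nat \<Rightarrow> (nat \<Rightarrow> 'c set) \<Rightarrow> (nat \<Rightarrow> nat) \<Rightarrow> (nat \<Rightarrow> 'c set) \<Rightarrow> 'c set \<Rightarrow> bool" where
  "iw_pav_winner n l Cs q A W \<longleftrightarrow>
     is_committee l Cs q W \<and>
     (\<forall>W'. is_committee l Cs q W' \<longrightarrow> iw_pav_score n l Cs A W' \<le> iw_pav_score n l Cs A W)"

end

theory Submission
  imports Defs
begin

lemma card1_sub2:
  assumes "S \<subseteq> {a, b::nat}" "card S = 1"
  shows "S = {a} \<or> S = {b}"
  using assms by (auto simp: card_Suc_eq) 

lemma pr1: "pav_r (Suc 0) = 1" by (simp add: pav_r_def)
lemma pr0: "pav_r 0 = 0" by (simp add: pav_r_def)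

lemma dist_le:
  assumes "S = {a} \<or> S = {b}" "a \<noteq> b"
  shows "pav_r (card (S \<inter> {a})) + pav_r (card (S \<inter> {b})) \<le> 1"
  using assms by (auto simp: pr0 pr1)

theorem mainTheorem13:
  shows "\<exists>(n::nat) (l::nat) (Cs::nat \<Rightarrow> nat set) (q::nat \<Rightarrow> nat) (A::nat \<Rightarrow> nat set) (W::nat set).
           scv_instance n l Cs q A \<and> iw_pav_winner n l Cs q A W \<and> \<not> weak_SW_JR n l Cs q A W"
proof -
  define Cs :: "nat \<Rightarrow> nat set" where "Cs = (\<lambda>j. if j = 1 then {1,3} else {2,4})"
  define A :: "nat \<Rightarrow> nat set" where "A = (\<lambda>i. if i = 1 then {1,2} else {3,4})"
  define q :: "nat \<Rightarrow> nat" where "q = (\<lambda>_. 1)"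
  define W :: "nat set" where "W = {3,4}"
  have i12g: "{1..2::nat} = {1,2}" by (simp add: numeral_2_eq_2 atLeastAtMostSuc_conv insert_commute)
  have cand: "scv_candidates 2 Cs = {1,2,3,4}"
  proof -
    have i12: "{1..2::nat} = {1,2}" by (simp add: numeral_2_eq_2 atLeastAtMostSuc_conv insert_commute)
    show ?thesis unfolding scv_candidates_def i12 by (auto simp: Cs_def)
  qed
  have inst: "scv_instance 2 2 Cs q A"
  proof -
    have i12: "{1..2::nat} = {1,2}" by (simp add: numeral_2_eq_2 atLeastAtMostSuc_conv insert_commute)
    show ?thesis unfolding scv_instance_def cand i12
      by (auto simp: Cs_def q_def A_def)
  qed
  have sc: "\<And>V. iw_pav_score 2 2 Cs A V =
      (pav_r (card (V \<inter> {1,2} \<inter> {1,3})) + pav_r (card (V \<inter> {3,4} \<inter> {1,3})))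
    + (pav_r (card (V \<inter> {1,2} \<inter> {2,4})) + pav_r (card (V \<inter> {3,4} \<inter> {2,4})))"
    by (simp add: iw_pav_score_def Cs_def A_def numeral_2_eq_2)
  have WW: "iw_pav_score 2 2 Cs A W = 2"
    unfolding sc W_def by (simp add: pr0 pr1 Int_insert_left)
  have comm: "is_committee 2 Cs q W"
    unfolding is_committee_def cand by (auto simp: W_def Cs_def q_def)
  have le: "iw_pav_score 2 2 Cs A V \<le> 2" if "is_committee 2 Cs q V" for V
  proof -
    from that have V: "V \<subseteq> {1,2,3,4}" "card (V \<inter> {1,3}) = 1" "card (V \<inter> {2,4}) = 1"
      unfolding is_committee_def cand i12g by (auto simp: Cs_def q_def)
    have e1: "V \<inter> {1,2} \<inter> {1,3} = (V \<inter> {1,3}) \<inter> {1}" "V \<inter> {3,4} \<inter> {1,3} = (V \<inter> {1,3}) \<inter> {3}"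
      "V \<inter> {1,2} \<inter> {2,4} = (V \<inter> {2,4}) \<inter> {2}" "V \<inter> {3,4} \<inter> {2,4} = (V \<inter> {2,4}) \<inter> {4}"
      by auto
    have a: "V \<inter> {1,3} = {1} \<or> V \<inter> {1,3} = {3}" by (rule card1_sub2) (use V in auto)
    have b: "V \<inter> {2,4} = {2} \<or> V \<inter> {2,4} = {4}" by (rule card1_sub2) (use V in auto)
    have "pav_r (card ((V \<inter> {1,3}) \<inter> {1})) + pav_r (card ((V \<inter> {1,3}) \<inter> {3})) \<le> 1"
      by (rule dist_le[OF a]) simp
    moreover have "pav_r (card ((V \<inter> {2,4}) \<inter> {2})) + pav_r (card ((V \<inter> {2,4}) \<inter> {4})) \<le> 1"
      by (rule dist_le[OF b]) simp
    ultimately show ?thesis unfolding sc e1 by linarith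
  qed
  have win: "iw_pav_winner 2 2 Cs q A W"
    unfolding iw_pav_winner_def using comm le WW by auto
  have tq: "total_quota 2 q = 2" by (simp add: total_quota_def q_def)
  have notjr: "\<not> weak_SW_JR 2 2 Cs q A W"
    unfolding weak_SW_JR_def tq
  proof
    assume H: "\<forall>X. X \<subseteq> {1..2} \<longrightarrow> real 2 / real 2 \<le> real (card X) \<longrightarrow>
          (\<forall>j\<in>{1..2}. 1 \<le> card (\<Inter> (A ` X) \<inter> Cs j)) \<longrightarrow> 1 \<le> card (W \<inter> \<Union> (A ` X))"
    have "(\<forall>j\<in>{1..2::nat}. 1 \<le> card (\<Inter> (A ` {1}) \<inter> Cs j))"
    proof
      fix j :: nat assume "j \<in> {1..2}"
      hence "j = 1 \<or> j = 2" by auto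
      thus "1 \<le> card (\<Inter> (A ` {1}) \<inter> Cs j)"
        by (auto simp: A_def Cs_def Int_insert_left)
    qed
    with H[rule_format, of "{1}"] have "1 \<le> card (W \<inter> \<Union> (A ` {1}))" by simp
    moreover have "W \<inter> \<Union> (A ` {1}) = {}" by (auto simp: W_def A_def)
    ultimately show False by simp
  qed
  show ?thesis using inst win notjr by blast
qed

end
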